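(* Let $k\in\{1,\dots,n\}$ and let $R$ be a run of an $n$-DPDA, with $|R|\ge1$, that is not $(k-1)$-upper. Suppose that there exists an index $j\in\{0,\dots,|R|-1\}$ such that $R[j,|R|]$ is $k$-upper, and that for the greatest such index $j$ the run $R[0,j]$ is $(k-1)$-upper. Then $R$ is a $k$-return.
   Context: Stacks: fix order $n\ge1$, finite stack alphabet $\Gamma$. A $0$-stack is $(\gamma,x)$ with $\gamma\in\Gamma$, $x=(x_n,\dots,x_1)$ a vector of $n$ positive integers (position). For $k\in\{1,\dots,n\}$ a $k$-stack is a finite list $[s_1,\dots,s_m]$ ($m\ge0$) of nonempty $(k-1)$-stacks such that for some $x_n,\dots,x_{k+1}$, every position in $s_i$ has the form $(x_n,\dots,x_{k+1},i,y_{k-1},\dots,y_1)$. The top is at the right; $s^k:s^{k-1}$ appends at the top (right-associative); for $s^r=t^r:t^{r-1}:\dots:t^k$, $\mathrm{top}^k(s^r)=t^k$. Equality of stacks includes positions. For $k<n$, $\mathsf p_{+1}(s^k)$ adds $1$ to the $(n-k)$-th coordinate of all positions. Operations of order $k\ge1$: $\mathsf{pop}^k(s^r:\dots:s^k:s^{k-1})=s^r:\dots:s^k$, defined only if the topmost $k$-stack has at least two $(k-1)$-stacks; $\mathsf{push}^k_\gamma(s^r:\dots:s^0)=s^r:\dots:s^{k+1}:(s^k:\dots:s^0):\mathsf p_{+1}(s^{k-1}:\dots:s^1:(\gamma,x))$ where $s^0=(\gamma',x)$. An $n$-DPDA has transitions determined by state and topmost stack symbol, each either $\mathrm{read}(\vec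 q)$ ($\vec q:A\to Q$ injective; leads to $(\vec q(a),s)$, reading $a$) or $(q,op)$ with $op$ a stack operation of order $\le n$ (leads to $(q,op(s))$ if defined). Configurations are (state, nonempty $n$-stack). A run is a finite sequence $R=c_0,\dots,c_m$ with each $c_i$ a successor of $c_{i-1}$; $R(i)=c_i$, $|R|=m$, $R[i,j]=c_i,\dots,c_j$. $\mathrm{top}^k(c)$, $\mathsf{pop}^k(c)$ refer to the stack of $c$. History: for a run $R$ and a $0$-stack $s^0$ of $R(|R|)$, $\mathrm{hist}(R,s^0)$ is a $0$-stack of $R(0)$: if $|R|=0$ it is $s^0$; if $R=S\circ T$, $|T|=1$, and the last step is a read or a $\mathsf{pop}$, or a $\mathsf{push}^r_\gamma$ with $s^0$ not in the topmost $(r-1)$-stack of $R(|R|)$, it is $\mathrm{hist}(S,s^0)$; if the last step is $\mathsf{push}^r_\gamma$ and $s^0$ is in the topmost $(r-1)$-stack of $R(|R|)$, it is $\mathrm{hist}(S,t^0)$ with $t^0$ equal to $s^0$ with the $(n-r+1)$-th position coordinate decreased by $1$. For a $k$-stack $s^k$ of $R(|R|)$, $k\ge1$, $\mathrm{hist}(R,s^k)$ is the $k$-stack of $R(0)$ containing $\mathrm{hist}(R,s^0)$ for all $0$-stacks $s^0$ of $s^k$. For $k\in\{0,\dots,n\}$, $R$ is $k$-upper if $\mathrm{hist}(R,\mathrm{top}^k(R(|R|)))=\mathrm{top}^k(R(0))$. For $k\in\{1,\dots,n\}$, $R$ is a $k$-return if $\mathrm{hist}(R,\mathrm{top}^{k-1}(R(|R|)))=\mathrm{top}^{k-1}(\mathsf{pop}^k(R(0)))$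 and $R[i,|R|]$ is not $(k-1)$-upper for every $i\in\{0,\dots,|R|-1\}$. *)

theory Defs
  imports Main
begin

text \<open>A stack of order 0 is Z gamma x (symbol and position vector x = [x_n,...,x_1]);
  a k-stack (k >= 1) is L [s_1,...,s_m], the top being the last list element.\<close>

datatype 'g stk = Z 'g "nat list" | L "'g stk list"

fun positions :: "'g stk \<Rightarrow> nat list set" where
  "positions (Z g x) = {x}"
| "positions (L l) = (\<Union>t\<in>set l. positions t)"

fun wf_stk :: "nat \<Rightarrow> nat \<Rightarrow> 'g stk \<Rightarrow> bool" where
  "wf_stk n 0 (Z g x) = (length x = n \<and> (\<forall>i\<in>set x. 0 < i))"
| "wf_stk n 0 (L l) = False"
| "wf_stk n (Suc k) (Z g x) = False"
| "wf_stk n (Suc k) (L l) =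
     ((\<forall>t\<in>set l. wf_stk n k t \<and> t \<noteq> L []) \<and>
      (\<exists>p. length p = n - Suc k \<and>
           (\<forall>i<length l. \<forall>x\<in>positions (l ! i). \<exists>y. x = p @ [Suc i] @ y)))"

fun sym :: "'g stk \<Rightarrow> 'g" where
  "sym (Z g x) = g"
| "sym (L l) = undefined"

text \<open>top_sub d s: the topmost substack d levels below s; for an n-stack s,
  top^k(s) = top_sub (n - k) s.\<close>
fun top_sub :: "nat \<Rightarrow> 'g stk \<Rightarrow> 'g stk" where
  "top_sub 0 s = s"
| "top_sub (Suc d) (L l) = (if l = [] then L [] else top_sub d (last l))"
| "top_sub (Suc d) (Z g x) = Z g x"

fun map_top :: "nat \<Rightarrow> ('g stk \<Rightarrow> 'g stk) \<Rightarrow> 'g stk \<Rightarrow> 'g stk" where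
  "map_top 0 f s = f s"
| "map_top (Suc d) f (L l) = (if l = [] then L l else L (butlast l @ [map_top d f (last l)]))"
| "map_top (Suc d) f (Z g x) = Z g x"

fun map_pos :: "(nat list \<Rightarrow> nat list) \<Rightarrow> 'g stk \<Rightarrow> 'g stk" where
  "map_pos f (Z g x) = Z g (f x)"
| "map_pos f (L l) = L (map (map_pos f) l)"

text \<open>p_{+1} on a j-stack (j < n): add 1 to the (n-j)-th coordinate (1-based) of all positions.\<close>
definition pplus :: "nat \<Rightarrow> nat \<Rightarrow> 'g stk \<Rightarrow> 'g stk" where
  "pplus n j s = map_pos (\<lambda>x. x[n - j - 1 := x ! (n - j - 1) + 1]) s"

definition set_sym :: "'g \<Rightarrow> 'g stk \<Rightarrow> 'g stk" where
  "set_sym \<gamma> t = (case t of Z g x \<Rightarrow> Z \<gamma> x | L l \<Rightarrow> L l)"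

definition pop :: "nat \<Rightarrow> nat \<Rightarrow> 'g stk \<Rightarrow> 'g stk option" where
  "pop n k s = (case top_sub (n - k) s of
      L l \<Rightarrow> if 2 \<le> length l
             then Some (map_top (n - k) (\<lambda>t. case t of L l' \<Rightarrow> L (butlast l') | Z g x \<Rightarrow> Z g x) s)
             else None
    | Z g x \<Rightarrow> None)"

definition push :: "nat \<Rightarrow> nat \<Rightarrow> 'g \<Rightarrow> 'g stk \<Rightarrow> 'g stk option" where
  "push n k \<gamma> s = (case top_sub (n - k) s of
      L l \<Rightarrow> if l \<noteq> []
             then Some (map_top (n - k)
                    (\<lambda>t. case t of
                        L l' \<Rightarrow> L (l' @ [pplus n (k - 1) (map_top (k - 1) (set_sym \<gamma>) (last l'))])
                      | Z g x \<Rightarrow> Z g x) s)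
             else None
    | Z g x \<Rightarrow> None)"

datatype 'g op = Pop nat | Push nat 'g

fun order :: "'g op \<Rightarrow> nat" where
  "order (Pop k) = k"
| "order (Push k g) = k"

datatype ('q, 'a, 'g) tr = Read "'a \<Rightarrow> 'q" | Op 'q "'g op"

type_synonym ('q, 'g) config = "'q \<times> 'g stk"

definition dpda :: "nat \<Rightarrow> ('q \<Rightarrow> 'g \<Rightarrow> ('q, 'a, 'g) tr option) \<Rightarrow> bool" where
  "dpda n \<delta> =
     ((\<forall>q g f. \<delta> q g = Some (Read f) \<longrightarrow> inj f) \<and>
      (\<forall>q g q' p. \<delta> q g = Some (Op q' p) \<longrightarrow> 1 \<le> order p \<and> order p \<le> n))"

fun op_app :: "nat \<Rightarrow> 'g op \<Rightarrow> 'g stk \<Rightarrow> 'g stk option" where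
  "op_app n (Pop k) s = pop n k s"
| "op_app n (Push k \<gamma>) s = push n k \<gamma> s"

definition topsym :: "nat \<Rightarrow> 'g stk \<Rightarrow> 'g" where
  "topsym n s = sym (top_sub n s)"

definition valid_config :: "nat \<Rightarrow> ('q, 'g) config \<Rightarrow> bool" where
  "valid_config n c = (wf_stk n n (snd c) \<and> snd c \<noteq> L [])"

definition succ :: "nat \<Rightarrow> ('q \<Rightarrow> 'g \<Rightarrow> ('q, 'a, 'g) tr option) \<Rightarrow> ('q, 'g) config \<Rightarrow> ('q, 'g) config \<Rightarrow> bool" where
  "succ n \<delta> c c' =
     (case \<delta> (fst c) (topsym n (snd c)) of
        None \<Rightarrow> False
      | Some (Read f) \<Rightarrow> (\<exists>a. c' = (f a, snd c))
      | Some (Op q p) \<Rightarrow> (\<exists>s'. op_app n p (snd c) = Some s' \<and> c' = (q, s')))"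

text \<open>A run c_0,...,c_m is a nonempty list; |R| = length R - 1.\<close>
definition run :: "nat \<Rightarrow> ('q \<Rightarrow> 'g \<Rightarrow> ('q, 'a, 'g) tr option) \<Rightarrow> ('q, 'g) config list \<Rightarrow> bool" where
  "run n \<delta> R =
     (R \<noteq> [] \<and> (\<forall>c\<in>set R. valid_config n c) \<and>
      (\<forall>i. i + 1 < length R \<longrightarrow> succ n \<delta> (R ! i) (R ! (i + 1))))"

text \<open>R[i,j] = c_i,...,c_j\<close>
definition sub :: "'c list \<Rightarrow> nat \<Rightarrow> nat \<Rightarrow> 'c list" where
  "sub R i j = drop i (take (Suc j) R)"

text \<open>0-stacks of a stack are identified by their (unique) positions.
  One backward history step along the step from c to c'.\<close>
definition hist_step :: "nat \<Rightarrow> ('q \<Rightarrow> 'g \<Rightarrow> ('q, 'a, 'g) tr option) \<Rightarrow>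
    ('q, 'g) config \<Rightarrow> ('q, 'g) config \<Rightarrow> nat list \<Rightarrow> nat list" where
  "hist_step n \<delta> c c' x =
     (case \<delta> (fst c) (topsym n (snd c)) of
        Some (Op q (Push r \<gamma>)) \<Rightarrow>
          if x \<in> positions (top_sub (n - (r - 1)) (snd c'))
          then x[n - r := x ! (n - r) - 1] else x
      | _ \<Rightarrow> x)"

fun hist_rev :: "nat \<Rightarrow> ('q \<Rightarrow> 'g \<Rightarrow> ('q, 'a, 'g) tr option) \<Rightarrow>
    ('q, 'g) config list \<Rightarrow> nat list \<Rightarrow> nat list" where
  "hist_rev n \<delta> [] x = x"
| "hist_rev n \<delta> [c] x = x"
| "hist_rev n \<delta> (c' # c # cs) x = hist_rev n \<delta> (c # cs) (hist_step n \<delta> c c' x)"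

text \<open>hist(R, s^0) for the 0-stack of R(|R|) at position x: position of a 0-stack of R(0).\<close>
definition hist :: "nat \<Rightarrow> ('q \<Rightarrow> 'g \<Rightarrow> ('q, 'a, 'g) tr option) \<Rightarrow>
    ('q, 'g) config list \<Rightarrow> nat list \<Rightarrow> nat list" where
  "hist n \<delta> R x = hist_rev n \<delta> (rev R) x"

text \<open>R is k-upper: hist(R, top^k(R(|R|))) = top^k(R(0)), i.e. the k-stack of R(0)
  containing the histories of all 0-stacks of top^k(R(|R|)) is top^k(R(0)).\<close>
definition upper :: "nat \<Rightarrow> ('q \<Rightarrow> 'g \<Rightarrow> ('q, 'a, 'g) tr option) \<Rightarrow> nat \<Rightarrow>
    ('q, 'g) config list \<Rightarrow> bool" where
  "upper n \<delta> k R =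
     (\<forall>x\<in>positions (top_sub (n - k) (snd (last R))).
        hist n \<delta> R x \<in> positions (top_sub (n - k) (snd (hd R))))"

definition kreturn :: "nat \<Rightarrow> ('q \<Rightarrow> 'g \<Rightarrow> ('q, 'a, 'g) tr option) \<Rightarrow> nat \<Rightarrow>
    ('q, 'g) config list \<Rightarrow> bool" where
  "kreturn n \<delta> k R =
     ((\<exists>s'. pop n k (snd (hd R)) = Some s' \<and>
        (\<forall>x\<in>positions (top_sub (n - (k - 1)) (snd (last R))).
           hist n \<delta> R x \<in> positions (top_sub (n - (k - 1)) s'))) \<and>
      (\<forall>i<length R - 1. \<not> upper n \<delta> (k - 1) (sub R i (length R - 1))))"

end

theory Submission
  imports Defs
begin


function toppos :: "'g stk \<Rightarrow> nat list" where
  "toppos (Z g x) = x"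
| "toppos (L l) = (if l = [] then [] else toppos (last l))"
  by pat_completeness auto
termination
  apply (relation "measure size")
   apply simp
  apply (simp add: less_Suc_eq_le)
  apply (rule size_list_estimation'[OF last_in_set])
   apply auto
  done

lemma wf_pos_len: "wf_stk n k s \<Longrightarrow> x \<in> positions s \<Longrightarrow> length x = n \<and> (\<forall>i\<in>set x. 0 < i)"
  by (induction n k s rule: wf_stk.induct) auto

lemma wf_top: "wf_stk n k s \<Longrightarrow> s \<noteq> L [] \<Longrightarrow> toppos s \<in> positions s"
proof (induction n k s rule: wf_stk.induct)
  case (4 n k l)
  then have "l \<noteq> []" by auto
  then have ll: "last l \<in> set l" by simp
  have "toppos (last l) \<in> positions (last l)" using 4 ll by auto
  then show ?case using ll \<open>l \<noteq> []\<close> by auto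
qed auto

lemma wf_idx: "wf_stk n (Suc k) (L l) \<Longrightarrow> i < length l \<Longrightarrow> x \<in> positions (l!i) \<Longrightarrow> x ! (n - Suc k) = Suc i"
proof -
  assume "wf_stk n (Suc k) (L l)" "i < length l" "x \<in> positions (l!i)"
  then obtain p where "length p = n - Suc k" "\<forall>i<length l. \<forall>x\<in>positions (l ! i). \<exists>y. x = p @ [Suc i] @ y" by auto
  with \<open>i < length l\<close> \<open>x \<in> positions (l!i)\<close> obtain y where "x = p @ [Suc i] @ y" "length p = n - Suc k" by blast
  then show ?thesis by (simp add: nth_append)
qed

lemma wf_prefix: "wf_stk n k s \<Longrightarrow> k \<le> n \<Longrightarrow> x \<in> positions s \<Longrightarrow> y \<in> positions s \<Longrightarrow> take (n-k) x = take (n-k) y"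
proof (cases k)
  case 0
  assume a: "wf_stk n k s" "x \<in> positions s" "y \<in> positions s"
  with 0 show ?thesis by (cases s) auto
next
  case (Suc k')
  assume a: "wf_stk n k s" "k \<le> n" "x \<in> positions s" "y \<in> positions s"
  then obtain l where s: "s = L l" using Suc by (cases s) auto
  with a Suc obtain p where p: "length p = n - Suc k'" "\<forall>i<length l. \<forall>x\<in>positions (l ! i). \<exists>y. x = p @ [Suc i] @ y" by auto
  have "take (n-k) z = p" if "z \<in> positions s" for z
  proof -
    from that s obtain t where "t \<in> set l" "z \<in> positions t" by auto
    then obtain i where "i < length l" "t = l!i" by (auto simp: in_set_conv_nth)
    with p \<open>z \<in> positions t\<close> obtain y where "z = p @ [Suc i] @ y" by blast
    with p Suc show ?thesis by simp
  qed
  with a show ?thesis by simp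
qed

lemma top_sub_empty: "top_sub b (L []) = L []"
  by (cases b) auto

lemma top_sub_Z[simp]: "top_sub b (Z g x) = Z g x"
  by (cases b) auto

lemma top_sub_add: "top_sub (a+b) s = top_sub b (top_sub a s)"
proof (induction a arbitrary: s)
  case (Suc a)
  then show ?case by (cases s) (auto simp: top_sub_empty)
qed simp

lemma wf_top_sub: "wf_stk n k s \<Longrightarrow> s \<noteq> L [] \<Longrightarrow> d \<le> k \<Longrightarrow> wf_stk n (k-d) (top_sub d s) \<and> top_sub d s \<noteq> L [] \<and> toppos (top_sub d s) = toppos s \<and> positions (top_sub d s) \<subseteq> positions s"
proof (induction d arbitrary: k s)
  case (Suc d)
  then obtain k' where k: "k = Suc k'" by (cases k) auto
  with Suc obtain l where s: "s = L l" by (cases s) auto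
  with Suc have l: "l \<noteq> []" by auto
  then have ll: "last l \<in> set l" by simp
  with Suc k s have w: "wf_stk n k' (last l)" "last l \<noteq> L []" by auto
  from Suc.IH[OF w] Suc.prems k have IH: "wf_stk n (k' - d) (top_sub d (last l)) \<and> top_sub d (last l) \<noteq> L [] \<and>
    toppos (top_sub d (last l)) = toppos (last l) \<and> positions (top_sub d (last l)) \<subseteq> positions (last l)" by simp
  have p: "positions (last l) \<subseteq> positions s" using ll s by auto
  have ts: "top_sub (Suc d) s = top_sub d (last l)" using s l by simp
  have tt: "toppos s = toppos (last l)" using s l by simp
  have kk: "k - Suc d = k' - d" using k by simp
  show ?case unfolding ts tt kk using IH p by blast
qed simp

lemma C1: "wf_stk n k s \<Longrightarrow> k \<le> n \<Longrightarrow> s \<noteq> L [] \<Longrightarrow> d \<le> k \<Longrightarrow>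
   positions (top_sub d s) = {x \<in> positions s. take (n-k+d) x = take (n-k+d) (toppos s)}"
proof (induction d arbitrary: k s)
  case 0
  have "toppos s \<in> positions s" using wf_top[OF 0(1) 0(3)] .
  then have "\<And>x. x \<in> positions s \<Longrightarrow> take (n-k) x = take (n-k) (toppos s)"
    using wf_prefix[OF 0(1) 0(2)] by blast
  then show ?case by auto
next
  case (Suc d)
  obtain k' where k: "k = Suc k'" using Suc.prems by (cases k) auto
  with Suc.prems obtain l where s: "s = L l" by (cases s) auto
  with Suc.prems have l: "l \<noteq> []" by auto
  then have ll: "last l \<in> set l" by simp
  with Suc.prems k s have w: "wf_stk n k' (last l)" "last l \<noteq> L []" by auto
  have IH: "positions (top_sub d (last l)) = {x \<in> positions (last l). take (n-k'+d) x = take (n-k'+d) (toppos (last l))}"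
    using Suc.IH[OF w(1) _ w(2)] Suc.prems k by simp
  have e: "n - k' + d = n - k + Suc d" using Suc.prems k by simp
  have tl: "toppos (last l) \<in> positions (last l)" using wf_top w by blast
  have ws: "wf_stk n (Suc k') (L l)" using Suc.prems k s by simp
  have lastnth: "last l = l ! (length l - 1)" using l by (simp add: last_conv_nth)
  have tidx: "toppos (last l) ! (n - Suc k') = length l"
    using wf_idx[OF ws, of "length l - 1" "toppos (last l)"] tl lastnth l by simp
  have "x \<in> positions (last l)" if "x \<in> positions (L l)" "take (n-k+Suc d) x = take (n-k+Suc d) (toppos (last l))" for x
  proof -
    from that obtain t where "t \<in> set l" "x \<in> positions t" by auto
    then obtain i where i: "i < length l" "t = l!i" by (auto simp: in_set_conv_nth)
    have "x ! (n - Suc k') = Suc i" using wf_idx[OF ws i(1)] i \<open>x \<in> positions t\<close> by simp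
    moreover have "x ! (n - Suc k') = toppos (last l) ! (n - Suc k')"
    proof -
      have lt: "n - Suc k' < n - k + Suc d" using Suc.prems k by simp
      have "x ! (n - Suc k') = take (n-k+Suc d) x ! (n - Suc k')" using lt by simp
      also have "\<dots> = take (n-k+Suc d) (toppos (last l)) ! (n - Suc k')" using that(2) by simp
      also have "\<dots> = toppos (last l) ! (n - Suc k')" using lt by simp
      finally show ?thesis .
    qed
    ultimately have "i = length l - 1" using tidx by simp
    with i lastnth \<open>x \<in> positions t\<close> show ?thesis by simp
  qed
  moreover have "positions (last l) \<subseteq> positions (L l)" using ll by auto
  ultimately have "positions (top_sub d (last l)) = {x \<in> positions (L l). take (n-k+Suc d) x = take (n-k+Suc d) (toppos (last l))}"
    unfolding IH e by blast
  then show ?case using s l by simp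
qed
definition ok :: "nat \<Rightarrow> 'g stk \<Rightarrow> bool" where
  "ok n s = (wf_stk n n s \<and> s \<noteq> L [])"

lemma C1n: "ok n s \<Longrightarrow> d \<le> n \<Longrightarrow> positions (top_sub d s) = {x \<in> positions s. take d x = take d (toppos s)}"
  unfolding ok_def using C1[of n n s d] by simp

lemma ok_top: "ok n s \<Longrightarrow> toppos s \<in> positions s"
  unfolding ok_def using wf_top by blast

lemma ok_len: "ok n s \<Longrightarrow> x \<in> positions s \<Longrightarrow> length x = n \<and> (\<forall>i\<in>set x. 0 < i)"
  unfolding ok_def using wf_pos_len by blast

lemma TOPL: assumes "ok n s" "a < n"
  shows "\<exists>l. top_sub a s = L l \<and> l \<noteq> [] \<and> wf_stk n (n-a) (L l) \<and> toppos s ! a = length l \<and>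
     (\<forall>x\<in>positions s. take a x = take a (toppos s) \<longrightarrow> (\<exists>i<length l. x \<in> positions (l!i) \<and> x!a = Suc i))"
proof -
  have w: "wf_stk n n s" "s \<noteq> L []" using assms unfolding ok_def by auto
  have T: "wf_stk n (n-a) (top_sub a s)" "top_sub a s \<noteq> L []" "toppos (top_sub a s) = toppos s"
    using wf_top_sub[OF w, of a] assms by auto
  obtain m where m: "n - a = Suc m" using assms by (cases "n-a") auto
  then obtain l where l: "top_sub a s = L l" using T(1) by (cases "top_sub a s") auto
  with T have ln: "l \<noteq> []" by auto
  have ws: "wf_stk n (Suc m) (L l)" using T(1) l m by simp
  have am: "n - Suc m = a" using m assms by simp
  have tt: "toppos s = toppos (last l)" using T(3) l ln by simp
  have "toppos (last l) \<in> positions (last l)" using wf_top[of n m "last l"] ws ln by simp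
  then have "toppos s ! a = length l" using wf_idx[OF ws, of "length l - 1" "toppos (last l)"] tt am ln
    by (simp add: last_conv_nth)
  moreover have "\<exists>i<length l. x \<in> positions (l!i) \<and> x!a = Suc i"
    if "x \<in> positions s" "take a x = take a (toppos s)" for x
  proof -
    have "x \<in> positions (top_sub a s)" using C1n[OF assms(1), of a] assms that by simp
    then obtain t where "t \<in> set l" "x \<in> positions t" using l by auto
    then obtain i where i: "i < length l" "t = l!i" by (auto simp: in_set_conv_nth)
    then show ?thesis using wf_idx[OF ws i(1)] \<open>x \<in> positions t\<close> am by auto
  qed
  ultimately show ?thesis using l ln ws m by auto
qed

lemma C3: "ok n s \<Longrightarrow> a < n \<Longrightarrow> x \<in> positions s \<Longrightarrow> take a x = take a (toppos s) \<Longrightarrow> x!a \<le> toppos s ! a"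
proof -
  assume a: "ok n s" "a < n" "x \<in> positions s" "take a x = take a (toppos s)"
  from TOPL[OF a(1,2)] obtain l where l0: "top_sub a s = L l \<and> l \<noteq> [] \<and> wf_stk n (n-a) (L l) \<and> toppos s ! a = length l \<and>
     (\<forall>x\<in>positions s. take a x = take a (toppos s) \<longrightarrow> (\<exists>i<length l. x \<in> positions (l!i) \<and> x!a = Suc i))"
    by (elim exE)
  then have l: "toppos s ! a = length l"
    "\<forall>x\<in>positions s. take a x = take a (toppos s) \<longrightarrow> (\<exists>i<length l. x \<in> positions (l!i) \<and> x!a = Suc i)"
    by auto
  with a obtain i where "i < length l" "x!a = Suc i" by blast
  with l show ?thesis by simp
qed

lemma set_bl: "l \<noteq> [] \<Longrightarrow> set l = insert (last l) (set (butlast l))"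
  by (induction l) auto

lemma MT1: "positions (map_top d f s) \<subseteq> positions s \<union> positions (f (top_sub d s))"
proof (induction d arbitrary: s)
  case (Suc d)
  show ?case
  proof (cases s)
    case (L l)
    show ?thesis
    proof (cases "l = []")
      case False
      have e: "positions (map_top (Suc d) f s) = (\<Union>t\<in>set (butlast l). positions t) \<union> positions (map_top d f (last l))"
        using L False by (simp add: Un_commute)
      have b1: "(\<Union>t\<in>set (butlast l). positions t) \<subseteq> positions s" using L by (auto dest: in_set_butlastD)
      have b2: "positions (last l) \<subseteq> positions s" using L set_bl[OF False] by auto
      have ts: "top_sub (Suc d) s = top_sub d (last l)" using L False by simp
      have IH: "positions (map_top d f (last l)) \<subseteq> positions (last l) \<union> positions (f (top_sub d (last l)))"
        by (rule Suc.IH)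
      show ?thesis unfolding e ts using IH b1 b2 by blast
    qed (simp add: L)
  qed simp
qed simp

lemma MT2: "positions s - positions (map_top d f s) \<subseteq> positions (top_sub d s) - positions (f (top_sub d s))"
proof (induction d arbitrary: s)
  case (Suc d)
  show ?case
  proof (cases s)
    case (L l)
    show ?thesis
    proof (cases "l = []")
      case False
      have e: "positions (map_top (Suc d) f s) = (\<Union>t\<in>set (butlast l). positions t) \<union> positions (map_top d f (last l))"
        using L False by (simp add: Un_commute)
      have ps: "positions s = (\<Union>t\<in>set (butlast l). positions t) \<union> positions (last l)"
        using L set_bl[OF False] by auto
      have "top_sub (Suc d) s = top_sub d (last l)" using L False by simp
      then show ?thesis using Suc.IH[of "last l"] e ps by auto
    qed (simp add: L)
  qed simp
qed simp

lemma MT4: "wf_stk n k s \<Longrightarrow> s \<noteq> L [] \<Longrightarrow> d \<le> k \<Longrightarrow> top_sub d (map_top d f s) = f (top_sub d s)"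
proof (induction d arbitrary: k s)
  case (Suc d)
  obtain k' where k: "k = Suc k'" using Suc.prems by (cases k) auto
  with Suc.prems obtain l where s: "s = L l" by (cases s) auto
  with Suc.prems have l: "l \<noteq> []" by auto
  then have ll: "last l \<in> set l" by simp
  with Suc.prems k s have w: "wf_stk n k' (last l)" "last l \<noteq> L []" by auto
  have "top_sub d (map_top d f (last l)) = f (top_sub d (last l))" using Suc.IH[OF w] Suc.prems k by simp
  then show ?case using s l by simp
qed simp

lemma TP1: "wf_stk n k s \<Longrightarrow> s \<noteq> L [] \<Longrightarrow> d \<le> k \<Longrightarrow> toppos (map_top d f s) = toppos (f (top_sub d s))"
proof (induction d arbitrary: k s)
  case (Suc d)
  obtain k' where k: "k = Suc k'" using Suc.prems by (cases k) auto
  with Suc.prems obtain l where s: "s = L l" by (cases s) auto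
  with Suc.prems have l: "l \<noteq> []" by auto
  then have ll: "last l \<in> set l" by simp
  with Suc.prems k s have w: "wf_stk n k' (last l)" "last l \<noteq> L []" by auto
  have "toppos (map_top d f (last l)) = toppos (f (top_sub d (last l)))" using Suc.IH[OF w] Suc.prems k by simp
  then show ?case using s l by simp
qed simp

lemma MP: "positions (map_pos f t) = f ` positions t"
  by (induction t) auto




definition popf :: "'g stk \<Rightarrow> 'g stk" where
  "popf t = (case t of L l' \<Rightarrow> L (butlast l') | Z g x \<Rightarrow> Z g x)"

lemma POPU: "pop n r s = Some s' \<Longrightarrow> \<exists>l. top_sub (n-r) s = L l \<and> 2 \<le> length l \<and> s' = map_top (n-r) popf s"
  unfolding pop_def popf_def by (auto split: stk.splits if_splits)

lemma popf_L[simp]: "popf (L l) = L (butlast l)" by (simp add: popf_def)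

lemma POPDEF: assumes "ok n s" "a < n" "2 \<le> toppos s ! a"
  shows "\<exists>s'. pop n (n-a) s = Some s'"
proof -
  from TOPL[OF assms(1,2)] obtain l where "top_sub a s = L l" "toppos s ! a = length l" by blast
  then show ?thesis using assms unfolding pop_def by auto
qed

locale popctx =
  fixes n r :: nat and s s' :: "'g stk" and l
  assumes oks: "ok n s" and r1: "1 \<le> r" and rn: "r \<le> n" and P: "pop n r s = Some s'"
    and tl: "top_sub (n-r) s = L l" and l2: "2 \<le> length l" and s': "s' = map_top (n-r) popf s"
begin

lemma a_lt: "n - r < n" using r1 rn by simp

lemma ws: "wf_stk n n s" "s \<noteq> L []" using oks unfolding ok_def by auto

lemma lwf: "wf_stk n r (L l)" "toppos s ! (n-r) = length l"
  "\<And>x. x \<in> positions s \<Longrightarrow> take (n-r) x = take (n-r) (toppos s) \<Longrightarrow> \<exists>i<length l. x \<in> positions (l!i) \<and> x!(n-r) = Suc i"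
proof -
  from TOPL[OF oks a_lt] obtain l0 where l0: "top_sub (n-r) s = L l0 \<and> l0 \<noteq> [] \<and> wf_stk n (n-(n-r)) (L l0) \<and> toppos s ! (n-r) = length l0 \<and>
     (\<forall>x\<in>positions s. take (n-r) x = take (n-r) (toppos s) \<longrightarrow> (\<exists>i<length l0. x \<in> positions (l0!i) \<and> x!(n-r) = Suc i))"
    by (elim exE)
  then have "l0 = l" using tl by simp
  with l0 rn show "wf_stk n r (L l)" "toppos s ! (n-r) = length l"
    "\<And>x. x \<in> positions s \<Longrightarrow> take (n-r) x = take (n-r) (toppos s) \<Longrightarrow> \<exists>i<length l. x \<in> positions (l!i) \<and> x!(n-r) = Suc i"
    by auto
qed

lemma posT: "positions (L l) \<subseteq> positions s"
  using wf_top_sub[OF ws, of "n-r"] tl by auto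

lemma PA: "positions s' \<subseteq> positions s"
proof -
  have "positions (L (butlast l)) \<subseteq> positions (L l)" by (auto dest: in_set_butlastD)
  moreover have "positions (map_top (n-r) popf s) \<subseteq> positions s \<union> positions (popf (top_sub (n-r) s))" by (rule MT1)
  then have "positions s' \<subseteq> positions s \<union> positions (L (butlast l))" using s' tl by simp
  ultimately show ?thesis using posT by blast
qed

lemma bne: "butlast l \<noteq> []" using l2 by (cases l rule: rev_cases) auto

lemma top_Suc: "top_sub (Suc (n-r)) s = last l"
  using top_sub_add[of "n-r" 1 s] tl l2 by auto

lemma PB: "x \<in> positions s \<Longrightarrow> x \<notin> positions s' \<Longrightarrow> take (Suc (n-r)) x = take (Suc (n-r)) (toppos s)"
proof -
  assume x: "x \<in> positions s" "x \<notin> positions s'"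
  have "x \<in> positions (L l) - positions (L (butlast l))" using MT2[of s "n-r" popf] s' tl x by auto
  moreover have "l \<noteq> []" using l2 by auto
  ultimately have "x \<in> positions (last l)" using set_bl by fastforce
  then have "x \<in> positions (top_sub (Suc (n-r)) s)" using top_Suc by simp
  then show ?thesis using C1n[OF oks, of "Suc (n-r)"] a_lt by auto
qed

lemma lbl: "last (butlast l) = l ! (length l - 2)"
proof -
  have "last (butlast l) = butlast l ! (length (butlast l) - 1)" using bne by (simp add: last_conv_nth)
  also have "\<dots> = l ! (length l - 2)" using l2 by (simp add: nth_butlast numeral_2_eq_2)
  finally show ?thesis .
qed

lemma ts': "toppos s' = toppos (l ! (length l - 2))"
proof -
  have "toppos s' = toppos (popf (L l))" using TP1[OF ws, of "n-r" popf] s' tl by simp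
  also have "\<dots> = toppos (last (butlast l))" using bne by simp
  finally show ?thesis using lbl by simp
qed

lemma tin: "toppos s' \<in> positions (l ! (length l - 2))" and tidx: "toppos s' ! (n-r) = length l - 1"
proof -
  obtain r' where r': "r = Suc r'" using r1 by (cases r) auto
  have mem: "l ! (length l - 2) \<in> set l" using l2 by simp
  have w: "wf_stk n r' (l ! (length l - 2))" "l ! (length l - 2) \<noteq> L []"
    using lwf(1) r' mem by auto
  show t: "toppos s' \<in> positions (l ! (length l - 2))" using wf_top[OF w] ts' by simp
  have "toppos s' ! (n - Suc r') = Suc (length l - 2)"
    using wf_idx[of n r' l "length l - 2"] lwf(1) r' l2 t by simp
  then show "toppos s' ! (n-r) = length l - 1" using r' l2 by simp
qed

lemma PC: "take (n-r) (toppos s') = take (n-r) (toppos s)"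
proof -
  have "toppos s' \<in> positions (L l)" using tin l2 by (auto intro!: bexI[of _ "l ! (length l - 2)"])
  then have "toppos s' \<in> positions (top_sub (n-r) s)" using tl by simp
  then show ?thesis using C1n[OF oks, of "n-r"] by auto
qed

lemma PE: "toppos s' ! (n-r) = toppos s ! (n-r) - 1" "2 \<le> toppos s ! (n-r)"
  using tidx lwf(2) l2 by auto

lemma PD: "ok n s' \<Longrightarrow> x \<in> positions s' \<Longrightarrow> take (Suc (n-r)) x \<noteq> take (Suc (n-r)) (toppos s)"
proof
  assume o: "ok n s'" and x: "x \<in> positions s'" and e: "take (Suc (n-r)) x = take (Suc (n-r)) (toppos s)"
  have "take (n-r) x = take (n-r) (toppos s)" using e by (metis min.absorb1 le_SucI order_refl take_take)
  then have "take (n-r) x = take (n-r) (toppos s')" using PC by simp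
  then have "x \<in> positions (top_sub (n-r) s')" using C1n[OF o, of "n-r"] x by auto
  moreover have "top_sub (n-r) s' = L (butlast l)" using MT4[OF ws, of "n-r" popf] s' tl by simp
  ultimately obtain t where "t \<in> set (butlast l)" "x \<in> positions t" by auto
  then obtain i where i: "i < length l - 1" "t = l ! i" by (auto simp: in_set_conv_nth nth_butlast)
  then have "x ! (n-r) = Suc i" using wf_idx[of n "r-1" l i x] lwf(1) r1 \<open>x \<in> positions t\<close> by simp
  moreover have "x ! (n-r) = toppos s ! (n-r)"
    using e by (metis lessI nth_take)
  ultimately show False using i lwf(2) by simp
qed

lemma POP0: "x \<in> positions s \<Longrightarrow> take (n-r) x = take (n-r) (toppos s) \<Longrightarrow> x ! (n-r) = toppos s ! (n-r) - 1
  \<Longrightarrow> x \<in> positions (top_sub (Suc (n-r)) s')"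
proof -
  assume x: "x \<in> positions s" "take (n-r) x = take (n-r) (toppos s)" "x ! (n-r) = toppos s ! (n-r) - 1"
  have "top_sub (n-r) s' = L (butlast l)" using MT4[OF ws, of "n-r" popf] s' tl by simp
  then have "top_sub (Suc (n-r)) s' = last (butlast l)" using top_sub_add[of "n-r" 1 s'] bne by simp
  moreover obtain i where "i < length l" "x \<in> positions (l!i)" "x!(n-r) = Suc i" using lwf(3)[OF x(1,2)] by blast
  moreover have "i = length l - 2" using x(3) lwf(2) l2 \<open>x!(n-r) = Suc i\<close> by simp
  ultimately show ?thesis using lbl by simp
qed

end

lemma popctxI: "ok n s \<Longrightarrow> 1 \<le> r \<Longrightarrow> r \<le> n \<Longrightarrow> pop n r s = Some s' \<Longrightarrow> \<exists>l. popctx n r s s' l"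
  using POPU[of n r s s'] unfolding popctx_def by blast

definition pushf :: "nat \<Rightarrow> nat \<Rightarrow> 'g \<Rightarrow> 'g stk \<Rightarrow> 'g stk" where
  "pushf n r \<gamma> t = (case t of L l' \<Rightarrow> L (l' @ [pplus n (r - 1) (map_top (r - 1) (set_sym \<gamma>) (last l'))]) | Z g x \<Rightarrow> Z g x)"

lemma PUSHU: "push n r \<gamma> s = Some s' \<Longrightarrow> \<exists>l. top_sub (n-r) s = L l \<and> l \<noteq> [] \<and> s' = map_top (n-r) (pushf n r \<gamma>) s"
  unfolding push_def pushf_def by (auto split: stk.splits if_splits)

lemma pos_set_sym[simp]: "positions (set_sym g t) = positions t"
  by (cases t) (auto simp: set_sym_def)

lemma pos_top_sub: "positions (top_sub d s) \<subseteq> positions s"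
proof (induction d arbitrary: s)
  case (Suc d)
  then show ?case
  proof (cases s)
    case (L l)
    show ?thesis
    proof (cases "l = []")
      case False
      then have "last l \<in> set l" by simp
      then have sub: "positions (last l) \<subseteq> positions (L l)" unfolding positions.simps by blast
      have "top_sub (Suc d) s = top_sub d (last l)" using L False by simp
      then show ?thesis using order_trans[OF Suc.IH[of "last l"] sub] L by simp
    qed (simp add: L)
  qed simp
qed simp

lemma pos_map_top_sym: "positions (map_top d (set_sym g) s) = positions s"
  using MT1[of d "set_sym g" s] MT2[of s d "set_sym g"] pos_top_sub[of d s] by auto

locale pushctx =
  fixes n r :: nat and \<gamma> :: 'g and s s' :: "'g stk" and l
  assumes oks: "ok n s" and oks': "ok n s'" and r1: "1 \<le> r" and rn: "r \<le> n"
    and tl: "top_sub (n-r) s = L l" and lne: "l \<noteq> []" and s': "s' = map_top (n-r) (pushf n r \<gamma>) s"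
begin

definition inc :: "nat list \<Rightarrow> nat list" where "inc x = x[n-r := x!(n-r) + 1]"
definition dec :: "nat list \<Rightarrow> nat list" where "dec x = x[n-r := x!(n-r) - 1]"
definition new where "new = pplus n (r - 1) (map_top (r - 1) (set_sym \<gamma>) (last l))"

lemma ws: "wf_stk n n s" "s \<noteq> L []" using oks unfolding ok_def by auto

lemma a_lt: "n - r < n" using r1 rn by simp

lemma posT: "positions (L l) \<subseteq> positions s"
  using wf_top_sub[OF ws, of "n-r"] tl by auto

lemma pf_T: "pushf n r \<gamma> (L l) = L (l @ [new])" unfolding pushf_def new_def by simp

lemma PF: "positions s \<subseteq> positions s'"
  using MT2[of s "n-r" "pushf n r \<gamma>"] s' tl pf_T by auto

lemma PH: "positions s' \<subseteq> positions s \<union> positions new"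
  using MT1[of "n-r" "pushf n r \<gamma>" s] s' tl pf_T posT by auto

lemma topN: "top_sub (Suc (n-r)) s' = new"
proof -
  have "top_sub (n-r) s' = L (l @ [new])" using MT4[OF ws, of "n-r" "pushf n r \<gamma>"] s' tl pf_T by simp
  then show ?thesis using top_sub_add[of "n-r" 1 s'] by simp
qed

lemma top_Suc: "top_sub (Suc (n-r)) s = last l"
  using top_sub_add[of "n-r" 1 s] tl lne by auto

lemma posnew: "positions new = inc ` positions (last l)"
proof -
  have e: "n - (r - 1) - 1 = n - r" using r1 rn by simp
  show ?thesis unfolding new_def pplus_def MP pos_map_top_sym e inc_def by simp
qed

lemma Nchar: "x \<in> positions s' \<Longrightarrow> (x \<in> positions (top_sub (Suc (n-r)) s') \<longleftrightarrow> take (Suc (n-r)) x = take (Suc (n-r)) (toppos s'))"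
  using C1n[OF oks', of "Suc (n-r)"] a_lt by auto

lemma lastchar: "positions (last l) = {x \<in> positions s. take (Suc (n-r)) x = take (Suc (n-r)) (toppos s)}"
  using C1n[OF oks, of "Suc (n-r)"] a_lt top_Suc by auto

lemma dec_inc: "x \<in> positions s \<Longrightarrow> dec (inc x) = x"
  using ok_len[OF oks, of x] a_lt unfolding dec_def inc_def by simp

lemma Nimg: "positions (top_sub (Suc (n-r)) s') = inc ` positions (last l)"
  using topN posnew by simp

end

lemma pushctxI: "ok n s \<Longrightarrow> ok n s' \<Longrightarrow> 1 \<le> r \<Longrightarrow> r \<le> n \<Longrightarrow> push n r \<gamma> s = Some s' \<Longrightarrow> \<exists>l. pushctx n r \<gamma> s s' l"
  using PUSHU[of n r \<gamma> s s'] unfolding pushctx_def by blast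



lemma tk: "m \<le> d \<Longrightarrow> take d x = take d y \<Longrightarrow> take m x = take m y"
  by (metis min.absorb1 take_take)
lemma tn: "i < d \<Longrightarrow> take d x = take d y \<Longrightarrow> x!i = y!i"
  by (metis nth_take)
lemma tS: "a < length x \<Longrightarrow> a < length y \<Longrightarrow> (take (Suc a) x = take (Suc a) y) = (take a x = take a y \<and> x!a = y!a)"
  by (simp add: take_Suc_conv_app_nth)

definition Mx :: "'g stk \<Rightarrow> nat \<Rightarrow> nat list \<Rightarrow> bool" where
  "Mx s a w = (\<forall>z\<in>positions s. take a z = take a w \<longrightarrow> z!a \<le> w!a)"

context pushctx begin

definition hp where "hp x = (if x \<in> positions (top_sub (Suc (n-r)) s') then dec x else x)"

lemma inN: "x \<in> positions (top_sub (Suc (n-r)) s') \<Longrightarrow> \<exists>y \<in> positions (last l). x = inc y \<and> dec x = y"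
proof -
  assume "x \<in> positions (top_sub (Suc (n-r)) s')"
  then obtain y where y: "y \<in> positions (last l)" "x = inc y" using Nimg by auto
  then have "y \<in> positions s" using lastchar by auto
  then show ?thesis using y dec_inc by auto
qed

lemma lenS: "x \<in> positions s \<Longrightarrow> length x = n" using ok_len[OF oks] by blast
lemma lenS': "x \<in> positions s' \<Longrightarrow> length x = n" using ok_len[OF oks'] by blast

lemma PS1: "x \<in> positions s' \<Longrightarrow> hp x \<in> positions s"
proof (cases "x \<in> positions (top_sub (Suc (n-r)) s')")
  case True
  then obtain y where "y \<in> positions (last l)" "dec x = y" using inN by blast
  then show ?thesis using True lastchar unfolding hp_def by auto
next
  case False
  assume x: "x \<in> positions s'"
  then have "x \<in> positions s \<or> x \<in> positions new" using PH by auto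
  moreover have "x \<notin> positions new" using False topN by simp
  ultimately show ?thesis using False unfolding hp_def by auto
qed

lemma PS2: assumes "d \<le> n" "x \<in> positions s'" "y \<in> positions s'" "take d x = take d y"
  shows "take d (hp x) = take d (hp y)"
proof (cases "Suc (n-r) \<le> d")
  case True
  have e: "take (Suc (n-r)) x = take (Suc (n-r)) y" using tk[OF True assms(4)] .
  have mem: "(x \<in> positions (top_sub (Suc (n-r)) s')) = (y \<in> positions (top_sub (Suc (n-r)) s'))"
    using Nchar[OF assms(2)] Nchar[OF assms(3)] e by simp
  have xy: "x!(n-r) = y!(n-r)" using tn[OF _ assms(4), of "n-r"] True by simp
  show ?thesis using mem xy assms(4) unfolding hp_def dec_def by (simp add: take_update_swap)
next
  case False
  then have "d \<le> n - r" by simp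
  then have "take d (hp z) = take d z" for z unfolding hp_def dec_def by simp
  then show ?thesis using assms(4) by simp
qed

lemma PS3: assumes "a < n" "x \<in> positions s'" "y \<in> positions s'" "take a x = take a y" "y!a = Suc (x!a)"
  shows "hp y ! a = hp x ! a \<or> hp y ! a = Suc (hp x ! a)"
proof (cases "n - r = a")
  case False
  then show ?thesis using assms(5) unfolding hp_def dec_def by simp
next
  case True
  have lx: "length x = n" "length y = n" "length (toppos s') = n" using lenS' assms(2,3) ok_top[OF oks'] by auto
  have mx: "(x \<in> positions (top_sub (Suc (n-r)) s')) = (take a x = take a (toppos s') \<and> x!a = toppos s' ! a)"
    using Nchar[OF assms(2)] tS[of a x "toppos s'"] lx assms(1) True by simp
  have my: "(y \<in> positions (top_sub (Suc (n-r)) s')) = (take a y = take a (toppos s') \<and> y!a = toppos s' ! a)"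
    using Nchar[OF assms(3)] tS[of a y "toppos s'"] lx assms(1) True by simp
  have c3: "take a y = take a (toppos s') \<Longrightarrow> y!a \<le> toppos s' ! a" using C3[OF oks' assms(1) assms(3)] by simp
  show ?thesis
  proof (cases "x \<in> positions (top_sub (Suc (n-r)) s')")
    case X: True
    then have "take a x = take a (toppos s')" "x!a = toppos s' ! a" using mx by auto
    then have "y!a \<le> x!a" using c3 assms(4) by simp
    then show ?thesis using assms(5) by simp
  next
    case X: False
    show ?thesis
    proof (cases "y \<in> positions (top_sub (Suc (n-r)) s')")
      case True
      then have "hp y ! a = y!a - 1" unfolding hp_def dec_def using lx assms(1) True \<open>n - r = a\<close> by simp
      moreover have "hp x = x" using X unfolding hp_def by simp
      ultimately show ?thesis using assms(5) by simp
    next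
      case False
      then show ?thesis using X assms(5) unfolding hp_def by simp
    qed
  qed
qed

lemma PS4: assumes "a < n" "w \<in> positions s'" "Mx s' a w"
  shows "Mx s a (hp w)"
proof (cases "w \<in> positions (top_sub (Suc (n-r)) s')")
  case False
  then have "hp w = w" unfolding hp_def by simp
  then show ?thesis using assms(3) PF unfolding Mx_def by auto
next
  case True
  then obtain y where y: "y \<in> positions (last l)" "w = inc y" "dec w = y" using inN by blast
  have hw: "hp w = y" using True y unfolding hp_def by simp
  have ys: "y \<in> positions s" "take (Suc (n-r)) y = take (Suc (n-r)) (toppos s)" using y(1) lastchar by auto
  have ly: "length y = n" using lenS ys(1) by simp
  show ?thesis unfolding Mx_def hw
  proof (intro ballI impI)
    fix z assume z: "z \<in> positions s" "take a z = take a y"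
    have lz: "length z = n" using lenS z(1) by simp
    consider "n - r < a" | "a < n - r" | "n - r = a" by linarith
    then show "z ! a \<le> y ! a"
    proof cases
      case 1
      have "take (Suc (n-r)) z = take (Suc (n-r)) y" using tk[OF _ z(2)] 1 by simp
      then have "z \<in> positions (last l)" using lastchar z(1) ys(2) by simp
      then have "inc z \<in> positions (top_sub (Suc (n-r)) s')" using Nimg by simp
      then have iz: "inc z \<in> positions s'" using pos_top_sub by blast
      have "take a (inc z) = take a w" using z(2) y(2) tn[OF _ z(2), of "n-r"] 1 unfolding inc_def
        by (simp add: take_update_swap)
      then have "inc z ! a \<le> w ! a" using assms(3) iz unfolding Mx_def by blast
      then show ?thesis using 1 y(2) unfolding inc_def by simp
    next
      case 2
      have "take a w = take a y" using y(2) 2 unfolding inc_def by simp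
      then have "z ! a \<le> w ! a" using assms(3) z PF unfolding Mx_def by auto
      then show ?thesis using y(2) 2 unfolding inc_def by simp
    next
      case 3
      have "take a y = take a (toppos s)" using tk[OF _ ys(2), of a] 3 by simp
      then have "z ! a \<le> toppos s ! a" using C3[OF oks assms(1) z(1)] z(2) by simp
      moreover have "y ! a = toppos s ! a" using tn[OF _ ys(2), of a] 3 by simp
      ultimately show ?thesis by simp
    qed
  qed
qed

end


context popctx begin

lemma PM: assumes o': "ok n s'" and a: "a < n" and w: "w \<in> positions s'" and M: "Mx s' a w"
  shows "Mx s a w \<or> (n - r = a \<and> take a w = take a (toppos s') \<and> take a w = take a (toppos s))"
proof (cases "n - r = a \<and> take a w = take a (toppos s')")
  case True
  then show ?thesis using PC by simp
next
  case nt: False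
  have "Mx s a w" unfolding Mx_def
  proof (intro ballI impI)
    fix z assume z: "z \<in> positions s" "take a z = take a w"
    show "z ! a \<le> w ! a"
    proof (cases "z \<in> positions s'")
      case True
      then show ?thesis using M z(2) unfolding Mx_def by blast
    next
      case False
      have pb: "take (Suc (n-r)) z = take (Suc (n-r)) (toppos s)" using PB[OF z(1) False] .
      consider "n - r < a" | "a < n - r" | "n - r = a" by linarith
      then show ?thesis
      proof cases
        case 1
        have "take (Suc (n-r)) w = take (Suc (n-r)) z" using tk[OF _ z(2)[symmetric]] 1 by simp
        then show ?thesis using PD[OF o' w] pb by simp
      next
        case 2
        have za: "z!a = toppos s ! a" using tn[OF _ pb, of a] 2 by simp
        have pc: "take (n-r) (toppos s') = take (n-r) (toppos s)" by (rule PC)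
        have "toppos s' ! a = toppos s ! a" using tn[OF 2 pc] .
        moreover have "take a (toppos s') = take a (toppos s)" using tk[OF _ pc, of a] 2 by simp
        moreover have "take a (toppos s) = take a z" using tk[OF _ pb, of a] 2 by simp
        ultimately have "toppos s' ! a \<le> w ! a" using M ok_top[OF o'] z(2) unfolding Mx_def by auto
        then show ?thesis using za \<open>toppos s' ! a = toppos s ! a\<close> by simp
      next
        case 3
        have "take a z = take a (toppos s)" using tk[OF _ pb, of a] 3 by simp
        then have "take a w = take a (toppos s')" using PC z(2) 3 by simp
        then show ?thesis using nt 3 by simp
      qed
    qed
  qed
  then show ?thesis by simp
qed

end

definition stepc :: "nat \<Rightarrow> 'g stk \<Rightarrow> 'g stk \<Rightarrow> (nat list \<Rightarrow> nat list) \<Rightarrow> bool" where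
  "stepc n s s' h = ((s' = s \<and> h = id) \<or> (\<exists>r. 1 \<le> r \<and> r \<le> n \<and> pop n r s = Some s' \<and> h = id) \<or>
     (\<exists>r \<gamma>. 1 \<le> r \<and> r \<le> n \<and> push n r \<gamma> s = Some s' \<and>
        h = (\<lambda>x. if x \<in> positions (top_sub (Suc (n-r)) s') then x[n-r := x!(n-r) - 1] else x)))"

lemma STEP: assumes "dpda n \<delta>" "succ n \<delta> c c'"
  shows "stepc n (snd c) (snd c') (hist_step n \<delta> c c')"
proof -
  from assms(2) obtain tr where tr: "\<delta> (fst c) (topsym n (snd c)) = Some tr" unfolding succ_def by (auto split: option.splits)
  show ?thesis
  proof (cases tr)
    case (Read f)
    then obtain a where "c' = (f a, snd c)" using assms(2) tr unfolding succ_def by auto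
    moreover have "hist_step n \<delta> c c' = id" using tr Read unfolding hist_step_def by (auto simp: fun_eq_iff)
    ultimately show ?thesis unfolding stepc_def by simp
  next
    case (Op q p)
    then obtain s' where s': "op_app n p (snd c) = Some s'" "c' = (q, s')" using assms(2) tr unfolding succ_def by auto
    have ord: "1 \<le> order p" "order p \<le> n" using assms(1) tr Op unfolding dpda_def by blast+
    show ?thesis
    proof (cases p)
      case (Pop r)
      have "hist_step n \<delta> c c' = id" using tr Op Pop unfolding hist_step_def by (auto simp: fun_eq_iff)
      then show ?thesis using s' ord Pop unfolding stepc_def by auto
    next
      case (Push r g)
      have e: "n - (r - 1) = Suc (n - r)" using ord Push by simp
      have "hist_step n \<delta> c c' = (\<lambda>x. if x \<in> positions (top_sub (Suc (n-r)) (snd c')) then x[n-r := x!(n-r) - 1] else x)"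
        using tr Op Push e unfolding hist_step_def by (auto simp: fun_eq_iff)
      then show ?thesis using s' ord Push unfolding stepc_def by auto
    qed
  qed
qed

lemma stepc_cases:
  assumes "stepc n s s' h" "ok n s" "ok n s'"
  obtains (id) "s' = s" "h = id"
  | (pop) r l where "popctx n r s s' l" "h = id"
  | (push) r \<gamma> l where "pushctx n r \<gamma> s s' l" "h = pushctx.hp n r s'"
proof -
  from assms(1) consider "s' = s \<and> h = id" | "\<exists>r. 1 \<le> r \<and> r \<le> n \<and> pop n r s = Some s' \<and> h = id" |
     "\<exists>r \<gamma>. 1 \<le> r \<and> r \<le> n \<and> push n r \<gamma> s = Some s' \<and>
        h = (\<lambda>x. if x \<in> positions (top_sub (Suc (n-r)) s') then x[n-r := x!(n-r) - 1] else x)"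
    unfolding stepc_def by blast
  then show ?thesis
  proof cases
    case 1 then show ?thesis using that(1) by blast
  next
    case 2
    then obtain r where r: "1 \<le> r" "r \<le> n" "pop n r s = Some s'" "h = id" by blast
    then obtain l where "popctx n r s s' l" using popctxI[OF assms(2)] by blast
    then show ?thesis using that(2) r by blast
  next
    case 3
    then obtain r \<gamma> where r: "1 \<le> r" "r \<le> n" "push n r \<gamma> s = Some s'"
      "h = (\<lambda>x. if x \<in> positions (top_sub (Suc (n-r)) s') then x[n-r := x!(n-r) - 1] else x)" by blast
    then obtain l where pc: "pushctx n r \<gamma> s s' l" using pushctxI[OF assms(2,3)] by blast
    have "h = pushctx.hp n r s'"
      using r(4) unfolding pushctx.hp_def[OF pc] pushctx.dec_def[OF pc] by (simp add: fun_eq_iff)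
    then show ?thesis using that(3) pc by blast
  qed
qed


lemma ST1: "stepc n s s' h \<Longrightarrow> ok n s \<Longrightarrow> ok n s' \<Longrightarrow> x \<in> positions s' \<Longrightarrow> h x \<in> positions s"
  by (erule stepc_cases) (auto dest: popctx.PA pushctx.PS1)

lemma ST2: "stepc n s s' h \<Longrightarrow> ok n s \<Longrightarrow> ok n s' \<Longrightarrow> d \<le> n \<Longrightarrow> x \<in> positions s' \<Longrightarrow> y \<in> positions s'
   \<Longrightarrow> take d x = take d y \<Longrightarrow> take d (h x) = take d (h y)"
  by (erule stepc_cases) (auto dest: pushctx.PS2)

lemma ST3: "stepc n s s' h \<Longrightarrow> ok n s \<Longrightarrow> ok n s' \<Longrightarrow> a < n \<Longrightarrow> x \<in> positions s' \<Longrightarrow> y \<in> positions s'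
   \<Longrightarrow> take a x = take a y \<Longrightarrow> y!a = Suc (x!a) \<Longrightarrow> h y ! a = h x ! a \<or> h y ! a = Suc (h x ! a)"
  by (erule stepc_cases) (auto dest: pushctx.PS3)

lemma ST4: assumes "stepc n s s' h" "ok n s" "ok n s'" "a < n" "w \<in> positions s'" "Mx s' a w"
  shows "Mx s a (h w) \<or> (pop n (n-a) s = Some s' \<and> h w = w \<and> take a w = take a (toppos s') \<and> take a w = take a (toppos s))"
  using assms(1-3)
proof (cases rule: stepc_cases)
  case id then show ?thesis using assms by simp
next
  case (pop r l)
  have "Mx s a w \<or> (n - r = a \<and> take a w = take a (toppos s') \<and> take a w = take a (toppos s))"
    using popctx.PM[OF pop(1) assms(3,4,5,6)] .
  moreover have "n - r = a \<Longrightarrow> r = n - a" using popctx.rn[OF pop(1)] assms(4) by simp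
  ultimately show ?thesis using pop popctx.P[OF pop(1)] by auto
next
  case (push r \<gamma> l)
  then show ?thesis using pushctx.PS4[OF push(1) assms(4,5,6)] by simp
qed

lemma hist_snoc: "xs \<noteq> [] \<Longrightarrow> hist n \<delta> (xs @ [c']) x = hist n \<delta> xs (hist_step n \<delta> (last xs) c' x)"
proof -
  assume "xs \<noteq> []"
  then obtain ys y where xs: "xs = ys @ [y]" by (cases xs rule: rev_cases) auto
  show ?thesis unfolding hist_def xs by simp
qed

locale runctx =
  fixes n :: nat and \<delta> :: "'q \<Rightarrow> 'g \<Rightarrow> ('q, 'a, 'g) tr option" and R :: "('q, 'g) config list"
  assumes dp: "dpda n \<delta>" and rn: "run n \<delta> R"
begin

definition S where "S i = snd (R ! i)"
definition H where "H i j x = hist n \<delta> (sub R i j) x"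
definition hs where "hs i = hist_step n \<delta> (R ! i) (R ! Suc i)"

lemma okR: "i < length R \<Longrightarrow> ok n (S i)"
  using rn unfolding run_def valid_config_def ok_def S_def by (auto dest: nth_mem)

lemma stepR: "Suc i < length R \<Longrightarrow> stepc n (S i) (S (Suc i)) (hs i)"
  using STEP[OF dp, of "R!i" "R ! Suc i"] rn unfolding run_def S_def hs_def by auto

lemma sub_snoc: "i \<le> j \<Longrightarrow> Suc j < length R \<Longrightarrow> sub R i (Suc j) = sub R i j @ [R ! Suc j]"
  unfolding sub_def by (simp add: take_Suc_conv_app_nth)

lemma sub_single: "j < length R \<Longrightarrow> sub R j j = [R ! j]"
  unfolding sub_def by (simp add: take_Suc_conv_app_nth)

lemma sub_ne: "i \<le> j \<Longrightarrow> j < length R \<Longrightarrow> sub R i j \<noteq> []"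
  unfolding sub_def by simp

lemma sub_last: "i \<le> j \<Longrightarrow> j < length R \<Longrightarrow> last (sub R i j) = R ! j"
proof -
  assume a: "i \<le> j" "j < length R"
  have l: "length (sub R i j) = Suc j - i" unfolding sub_def using a by simp
  have "last (sub R i j) = sub R i j ! (Suc j - i - 1)" using l a sub_ne[OF a] by (simp add: last_conv_nth)
  also have "\<dots> = R ! j" unfolding sub_def using a by simp
  finally show ?thesis .
qed

lemma sub_hd: "i \<le> j \<Longrightarrow> j < length R \<Longrightarrow> hd (sub R i j) = R ! i"
  unfolding sub_def by (simp add: hd_conv_nth min_def hd_drop_conv_nth)

lemma HID: "j < length R \<Longrightarrow> H j j x = x"
  unfolding H_def hist_def using sub_single by simp

lemma HS: "i \<le> j \<Longrightarrow> Suc j < length R \<Longrightarrow> H i (Suc j) x = H i j (hs j x)"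
proof -
  assume a: "i \<le> j" "Suc j < length R"
  have ne: "sub R i j \<noteq> []" using sub_ne a by simp
  have "H i (Suc j) x = hist n \<delta> (sub R i j @ [R ! Suc j]) x" unfolding H_def using sub_snoc[OF a] by simp
  also have "\<dots> = hist n \<delta> (sub R i j) (hist_step n \<delta> (last (sub R i j)) (R ! Suc j) x)" using hist_snoc[OF ne] .
  also have "\<dots> = H i j (hs j x)" unfolding H_def hs_def using sub_last a by simp
  finally show ?thesis .
qed

lemma H1: "Suc j < length R \<Longrightarrow> H j (Suc j) x = hs j x"
  using HS[of j j x] HID[of j] by simp

lemma HC: "i \<le> j \<Longrightarrow> j \<le> l \<Longrightarrow> l < length R \<Longrightarrow> H i l x = H i j (H j l x)"
proof (induction l arbitrary: x)
  case 0 then show ?case using HID by simp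
next
  case (Suc l)
  show ?case
  proof (cases "j = Suc l")
    case True then show ?thesis using HID Suc.prems by simp
  next
    case False
    then have jl: "j \<le> l" using Suc.prems by simp
    have l: "Suc l < length R" using Suc.prems by simp
    have "H i (Suc l) x = H i l (hs l x)" using HS[OF _ l] Suc.prems jl by simp
    also have "\<dots> = H i j (H j l (hs l x))" using Suc.IH[of "hs l x"] Suc.prems jl by simp
    also have "H j l (hs l x) = H j (Suc l) x" using HS[OF jl l] by simp
    finally show ?thesis .
  qed
qed

lemma P1: "i \<le> j \<Longrightarrow> j < length R \<Longrightarrow> x \<in> positions (S j) \<Longrightarrow> H i j x \<in> positions (S i)"
proof (induction j arbitrary: x)
  case 0 then show ?case using HID by simp
next
  case (Suc j)
  show ?case
  proof (cases "i = Suc j")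
    case True then show ?thesis using HID Suc.prems by simp
  next
    case False
    then have ij: "i \<le> j" using Suc.prems by simp
    have "hs j x \<in> positions (S j)" using ST1[OF stepR okR okR] Suc.prems by simp
    then show ?thesis using HS[OF ij Suc.prems(2)] Suc.IH ij Suc.prems by simp
  qed
qed

lemma P2: "i \<le> j \<Longrightarrow> j < length R \<Longrightarrow> d \<le> n \<Longrightarrow> x \<in> positions (S j) \<Longrightarrow> y \<in> positions (S j) \<Longrightarrow>
  take d x = take d y \<Longrightarrow> take d (H i j x) = take d (H i j y)"
proof (induction j arbitrary: x y)
  case 0 then show ?case using HID by simp
next
  case (Suc j)
  show ?case
  proof (cases "i = Suc j")
    case True then show ?thesis using HID Suc.prems by simp
  next
    case False
    then have ij: "i \<le> j" using Suc.prems by simp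
    have m: "hs j x \<in> positions (S j)" "hs j y \<in> positions (S j)" using ST1[OF stepR okR okR] Suc.prems by simp_all
    have "take d (hs j x) = take d (hs j y)"
      apply (rule ST2[OF stepR okR okR])
      using Suc.prems by auto
    then show ?thesis using HS[OF ij Suc.prems(2)] Suc.IH[OF ij _ _ m] Suc.prems by simp
  qed
qed

lemma P3: "i \<le> j \<Longrightarrow> j < length R \<Longrightarrow> a < n \<Longrightarrow> x \<in> positions (S j) \<Longrightarrow> y \<in> positions (S j) \<Longrightarrow>
  take a x = take a y \<Longrightarrow> y!a = Suc (x!a) \<Longrightarrow> H i j y ! a = H i j x ! a \<or> H i j y ! a = Suc (H i j x ! a)"
proof (induction j arbitrary: x y)
  case 0 then show ?case using HID by simp
next
  case (Suc j)
  show ?case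
  proof (cases "i = Suc j")
    case True then show ?thesis using HID Suc.prems by simp
  next
    case False
    then have ij: "i \<le> j" using Suc.prems by simp
    have m: "hs j x \<in> positions (S j)" "hs j y \<in> positions (S j)" using ST1[OF stepR okR okR] Suc.prems by simp_all
    have t: "take a (hs j x) = take a (hs j y)"
      apply (rule ST2[OF stepR okR okR])
      using Suc.prems by auto
    have c: "hs j y ! a = hs j x ! a \<or> hs j y ! a = Suc (hs j x ! a)"
      apply (rule ST3[OF stepR okR okR])
      using Suc.prems by auto
    have oj: "ok n (S j)" using okR Suc.prems by simp
    have lx: "length (hs j x) = n" "length (hs j y) = n" using ok_len[OF oj] m by auto
    show ?thesis
    proof (cases "hs j y ! a = hs j x ! a")
      case True
      then have "take (Suc a) (hs j x) = take (Suc a) (hs j y)" using tS[of a "hs j x" "hs j y"] lx t Suc.prems by simp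
      then have "take (Suc a) (H i j (hs j x)) = take (Suc a) (H i j (hs j y))"
        using P2[OF ij _ _ m] Suc.prems by simp
      then have "H i j (hs j x) ! a = H i j (hs j y) ! a" using tn[of a "Suc a"] by blast
      then have "H i j (hs j y) ! a = H i j (hs j x) ! a" by simp
      then show ?thesis using HS[OF ij Suc.prems(2)] by simp
    next
      case False
      then have "hs j y ! a = Suc (hs j x ! a)" using c by simp
      then show ?thesis using HS[OF ij Suc.prems(2)] Suc.IH[OF ij _ _ m t] Suc.prems by simp
    qed
  qed
qed

lemma up_iff: "i \<le> j \<Longrightarrow> j < length R \<Longrightarrow> k \<le> n \<Longrightarrow>
  upper n \<delta> k (sub R i j) = (take (n-k) (H i j (toppos (S j))) = take (n-k) (toppos (S i)))"
proof -
  assume a: "i \<le> j" "j < length R" "k \<le> n"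
  have o: "ok n (S i)" "ok n (S j)" using okR a by auto
  have u: "upper n \<delta> k (sub R i j) = (\<forall>x\<in>positions (top_sub (n - k) (S j)). H i j x \<in> positions (top_sub (n - k) (S i)))"
    unfolding upper_def H_def S_def using sub_last[OF a(1,2)] sub_hd[OF a(1,2)] by simp
  have t: "toppos (S j) \<in> positions (S j)" using ok_top[OF o(2)] .
  show ?thesis
  proof
    assume "upper n \<delta> k (sub R i j)"
    then have "H i j (toppos (S j)) \<in> positions (top_sub (n - k) (S i))" using u C1n[OF o(2), of "n-k"] t by simp
    then show "take (n-k) (H i j (toppos (S j))) = take (n-k) (toppos (S i))" using C1n[OF o(1), of "n-k"] by simp
  next
    assume e: "take (n-k) (H i j (toppos (S j))) = take (n-k) (toppos (S i))"
    have "H i j x \<in> positions (top_sub (n - k) (S i))" if "x \<in> positions (top_sub (n - k) (S j))" for x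
    proof -
      have x: "x \<in> positions (S j)" "take (n-k) x = take (n-k) (toppos (S j))" using that C1n[OF o(2), of "n-k"] by auto
      have "take (n-k) (H i j x) = take (n-k) (toppos (S i))" using P2[OF a(1,2) _ x(1) t x(2)] e by simp
      moreover have "H i j x \<in> positions (S i)" using P1[OF a(1,2) x(1)] .
      ultimately show ?thesis using C1n[OF o(1), of "n-k"] by simp
    qed
    then show "upper n \<delta> k (sub R i j)" using u by blast
  qed
qed


lemma lenS: "i < length R \<Longrightarrow> x \<in> positions (S i) \<Longrightarrow> length x = n"
  using ok_len okR by blast

lemma MxTop: "i < length R \<Longrightarrow> a < n \<Longrightarrow> Mx (S i) a (toppos (S i))"
  unfolding Mx_def using C3 okR by blast

lemma compose: assumes "i \<le> j" "j \<le> l" "l < length R" "e \<le> n"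
  "take e (H i j (toppos (S j))) = take e (toppos (S i))"
  "take e (H j l (toppos (S l))) = take e (toppos (S j))"
  shows "take e (H i l (toppos (S l))) = take e (toppos (S i))"
proof -
  have tl: "toppos (S l) \<in> positions (S l)" using ok_top[OF okR[OF assms(3)]] .
  have x: "H j l (toppos (S l)) \<in> positions (S j)" using P1[OF assms(2,3) tl] .
  have tj: "toppos (S j) \<in> positions (S j)" using ok_top[OF okR] assms by simp
  have "take e (H i j (H j l (toppos (S l)))) = take e (H i j (toppos (S j)))"
    using P2[OF assms(1) _ assms(4) x tj assms(6)] assms by simp
  then show ?thesis using HC[OF assms(1,2,3)] assms(5) by simp
qed

lemma main:
  assumes k1: "1 \<le> k" and kn: "k \<le> n" and len: "2 \<le> length R"
    and notup: "\<not> upper n \<delta> (k - 1) R"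
    and ex: "\<exists>j < length R - 1. upper n \<delta> k (sub R j (length R - 1))"
    and gr: "upper n \<delta> (k - 1) (sub R 0 (GREATEST j. j < length R - 1 \<and> upper n \<delta> k (sub R j (length R - 1))))"
  shows "kreturn n \<delta> k R"
proof -
  define m where "m = length R - 1"
  define a where "a = n - k"
  define j where "j = (GREATEST j. j < length R - 1 \<and> upper n \<delta> k (sub R j (length R - 1)))"
  have mR: "m < length R" "1 \<le> m" using len unfolding m_def by auto
  have an: "a < n" using k1 kn unfolding a_def by simp
  have D: "n - (k - 1) = Suc a" using k1 kn unfolding a_def by simp
  have nk: "n - k = a" unfolding a_def by simp
  have Rsub: "sub R 0 m = R" unfolding sub_def m_def using mR by simp
  have jP: "j < m \<and> upper n \<delta> k (sub R j m)"
    unfolding j_def m_def using GreatestI_ex_nat[of "\<lambda>j. j < length R - 1 \<and> upper n \<delta> k (sub R j (length R - 1))" "length R"] ex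
    by fastforce
  have jmax: "\<And>i. i < m \<Longrightarrow> upper n \<delta> k (sub R i m) \<Longrightarrow> i \<le> j"
    unfolding j_def m_def
    by (rule Greatest_le_nat[of _ _ "length R"]) auto
  have jup: "upper n \<delta> (k - 1) (sub R 0 j)" using gr unfolding j_def by simp
  define tp where "tp i = toppos (S i)" for i
  have tpin: "\<And>i. i < length R \<Longrightarrow> tp i \<in> positions (S i)" unfolding tp_def using ok_top okR by blast
  have Uk: "\<And>i l. i \<le> l \<Longrightarrow> l < length R \<Longrightarrow> upper n \<delta> k (sub R i l) = (take a (H i l (tp l)) = take a (tp i))"
    using up_iff kn nk unfolding tp_def by simp
  have UD: "\<And>i l. i \<le> l \<Longrightarrow> l < length R \<Longrightarrow> upper n \<delta> (k-1) (sub R i l) = (take (Suc a) (H i l (tp l)) = take (Suc a) (tp i))"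
    using up_iff[of _ _ "k-1"] kn D unfolding tp_def by simp
  have notD: "take (Suc a) (H 0 m (tp m)) \<noteq> take (Suc a) (tp 0)" using notup UD[of 0 m] mR Rsub by simp
  have j0: "take (Suc a) (H 0 j (tp j)) = take (Suc a) (tp 0)" using jup UD[of 0 j] jP mR by simp
  have jk: "take a (H j m (tp m)) = take a (tp j)" using jP Uk[of j m] mR by simp
  have NotTop: "take (Suc a) (H j m (tp m)) \<noteq> take (Suc a) (tp j)"
  proof
    assume "take (Suc a) (H j m (tp m)) = take (Suc a) (tp j)"
    then have "take (Suc a) (H 0 m (tp m)) = take (Suc a) (tp 0)"
      using compose[of 0 j m "Suc a"] j0 jP mR an unfolding tp_def by simp
    then show False using notD by simp
  qed
  have eqMx: "\<And>i w. i < length R \<Longrightarrow> w \<in> positions (S i) \<Longrightarrow> Mx (S i) a w \<Longrightarrow> take a w = take a (tp i) \<Longrightarrow>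
      take (Suc a) w = take (Suc a) (tp i)"
  proof -
    fix i w assume i: "i < length R" "w \<in> positions (S i)" "Mx (S i) a w" "take a w = take a (tp i)"
    have "tp i ! a \<le> w ! a" using i(3) tpin[OF i(1)] i(4) unfolding Mx_def by simp
    moreover have "w ! a \<le> tp i ! a" using C3[OF okR[OF i(1)] an i(2)] i(4) unfolding tp_def by simp
    ultimately have "w ! a = tp i ! a" by simp
    moreover have "length w = n" "length (tp i) = n" using lenS i tpin by auto
    ultimately show "take (Suc a) w = take (Suc a) (tp i)" using tS[of a w "tp i"] i(4) an by simp
  qed
  have jm1: "j = m - 1"
  proof (rule ccontr)
    assume jne: "j \<noteq> m - 1"
    then have jlt: "j < m - 1" using jP by arith
    have bk: "\<forall>d. d \<le> m - j \<longrightarrow> Mx (S (m-d)) a (H (m-d) m (tp m))"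
    proof (intro allI)
      fix d show "d \<le> m - j \<longrightarrow> Mx (S (m-d)) a (H (m-d) m (tp m))"
      proof (induction d)
        case 0 then show ?case using MxTop[OF mR(1) an] HID[OF mR(1)] unfolding tp_def by simp
      next
        case (Suc d)
        show ?case
        proof
          assume dle: "Suc d \<le> m - j"
          define i where "i = m - Suc d"
          have i1: "Suc i = m - d" "Suc i \<le> m" "j \<le> i" using dle jP unfolding i_def by auto
          have iR: "Suc i < length R" using i1 mR by simp
          define w where "w = H (Suc i) m (tp m)"
          have Mw: "Mx (S (Suc i)) a w" using Suc.IH dle i1 unfolding w_def by simp
          have wp: "w \<in> positions (S (Suc i))" unfolding w_def using P1 i1 mR tpin by simp
          have Hi: "H i m (tp m) = hs i w"
            using HC[of i "Suc i" m "tp m"] i1 mR H1[OF iR] unfolding w_def by simp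
          have st: "Mx (S i) a (hs i w) \<or> (pop n (n-a) (S i) = Some (S (Suc i)) \<and> hs i w = w \<and>
               take a w = take a (toppos (S (Suc i))) \<and> take a w = take a (toppos (S i)))"
            using ST4[OF stepR[OF iR] okR okR an wp Mw] iR by simp
          show "Mx (S (m - Suc d)) a (H (m - Suc d) m (tp m))"
          proof (cases "Mx (S i) a (hs i w)")
            case True then show ?thesis using Hi unfolding i_def by simp
          next
            case False
            then have f: "hs i w = w" "take a w = take a (tp (Suc i))" "take a w = take a (tp i)"
              using st unfolding tp_def by auto
            have u1: "upper n \<delta> k (sub R (Suc i) m)" using Uk[of "Suc i" m] i1 mR f(2) unfolding w_def by simp
            have u0: "upper n \<delta> k (sub R i m)" using Uk[of i m] i1 mR f Hi by simp
            show ?thesis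
            proof (cases "Suc i < m")
              case True
              then have "Suc i \<le> j" using jmax u1 by simp
              then show ?thesis using i1 by simp
            next
              case False
              then have "i < m" "j < i" using i1 jlt by auto
              then show ?thesis using jmax u0 by fastforce
            qed
          qed
        qed
      qed
    qed
    then have Mj: "Mx (S j) a (H j m (tp m))" using bk[rule_format, of "m - j"] jP by simp
    have "take (Suc a) (H j m (tp m)) = take (Suc a) (tp j)"
      using eqMx[OF _ _ Mj jk] P1 jP mR tpin by simp
    then show False using NotTop by simp
  qed
  have stm: "stepc n (S (m-1)) (S m) (hs (m-1))" using stepR[of "m-1"] mR by simp
  have Hm: "\<And>x. H (m-1) m x = hs (m-1) x" using H1[of "m-1"] mR by simp
  have okm: "ok n (S m)" "ok n (S (m-1))" using okR mR by auto
  have jk': "take a (hs (m-1) (tp m)) = take a (tp (m-1))" using jk jm1 Hm by simp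
  have NotTop': "take (Suc a) (hs (m-1) (tp m)) \<noteq> take (Suc a) (tp (m-1))" using NotTop jm1 Hm by simp
  have st: "Mx (S (m-1)) a (hs (m-1) (tp m)) \<or> (pop n (n-a) (S (m-1)) = Some (S m) \<and> hs (m-1) (tp m) = tp m \<and>
       take a (tp m) = take a (toppos (S m)) \<and> take a (tp m) = take a (toppos (S (m-1))))"
    using ST4[OF stm okm(2) okm(1) an tpin[OF mR(1)] MxTop[OF mR(1) an, folded tp_def]] .
  have hsm: "hs (m-1) (tp m) \<in> positions (S (m-1))" using ST1[OF stm okm(2) okm(1) tpin[OF mR(1)]] .
  have notMx: "\<not> Mx (S (m-1)) a (hs (m-1) (tp m))"
  proof
    assume "Mx (S (m-1)) a (hs (m-1) (tp m))"
    then have "take (Suc a) (hs (m-1) (tp m)) = take (Suc a) (tp (m-1))" using eqMx[OF _ hsm _ jk'] mR by simp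
    then show False using NotTop' by simp
  qed
  have popm: "pop n k (S (m-1)) = Some (S m)" and hsid: "hs (m-1) (tp m) = tp m"
    using st notMx nk kn by auto
  obtain l where pc: "popctx n k (S (m-1)) (S m) l" using popctxI[OF okm(2) k1 kn popm] by blast
  have PE: "tp m ! a = tp (m-1) ! a - 1" "2 \<le> tp (m-1) ! a"
    using popctx.PE[OF pc] nk unfolding tp_def by auto
  have PC: "take a (tp m) = take a (tp (m-1))" using popctx.PC[OF pc] nk unfolding tp_def by simp
  have tpm1: "tp m \<in> positions (S (m-1))" using popctx.PA[OF pc] tpin[OF mR(1)] by blast
  have tpm1': "tp (m-1) \<in> positions (S (m-1))" using tpin mR by simp
  have Sa: "tp (m-1) ! a = Suc (tp m ! a)" using PE by simp
  have Hm1: "\<And>i. i \<le> m - 1 \<Longrightarrow> H i m (tp m) = H i (m-1) (tp m)"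
    using HC[of _ "m-1" m "tp m"] Hm hsid mR by simp
  define u where "u = H 0 (m-1) (tp m)"
  define v where "v = H 0 (m-1) (tp (m-1))"
  have v0: "take (Suc a) v = take (Suc a) (tp 0)" using j0 jm1 unfolding v_def by simp
  have uv: "v ! a = u ! a \<or> v ! a = Suc (u ! a)"
    using P3[of 0 "m-1" a "tp m" "tp (m-1)"] mR an tpm1 tpm1' PC Sa unfolding u_def v_def by simp
  have tuv: "take a u = take a v" using P2[of 0 "m-1" a "tp m" "tp (m-1)"] mR an tpm1 tpm1' PC unfolding u_def v_def by simp
  have H0m: "H 0 m (tp m) = u" using Hm1[of 0] unfolding u_def by simp
  have up: "u \<in> positions (S 0)" using P1[of 0 "m-1" "tp m"] mR tpm1 unfolding u_def by simp
  have vp: "v \<in> positions (S 0)" using P1[of 0 "m-1" "tp (m-1)"] mR tpm1' unfolding v_def by simp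
  have R0: "0 < length R" using mR by linarith
  have lens: "length u = n" "length v = n" "length (tp 0) = n" using lenS[OF R0 up] lenS[OF R0 vp] lenS[OF R0 tpin[OF R0]] by auto
  have vsuc: "v ! a = Suc (u ! a)"
  proof (rule ccontr)
    assume "v ! a \<noteq> Suc (u ! a)"
    then have "v ! a = u ! a" using uv by simp
    then have "take (Suc a) u = take (Suc a) v" using tS[of a u v] lens tuv an by simp
    then show False using notD H0m v0 by simp
  qed
  have t0a: "tp 0 ! a = v ! a" using tn[OF _ v0, of a] by simp
  have "\<forall>x\<in>set u. 0 < x" using ok_len[OF okR[OF R0] up] by simp
  moreover have "u ! a \<in> set u" using lens an by simp
  ultimately have upos: "0 < u ! a" by blast
  have t02: "2 \<le> tp 0 ! a" using t0a vsuc upos by simp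
  have nnk: "n - a = k" using kn unfolding a_def by simp
  obtain s0' where p0: "pop n k (S 0) = Some s0'" using POPDEF[OF okR[OF R0] an] t02 nnk unfolding tp_def by auto
  obtain l0 where pc0: "popctx n k (S 0) s0' l0" using popctxI[OF okR[OF R0] k1 kn p0] by auto
  have part1: "\<forall>x\<in>positions (top_sub (n - (k - 1)) (snd (last R))). hist n \<delta> R x \<in> positions (top_sub (n - (k - 1)) s0')"
  proof
    fix x assume "x \<in> positions (top_sub (n - (k - 1)) (snd (last R)))"
    moreover have "last R = R ! m" using R0 unfolding m_def by (simp add: last_conv_nth)
    ultimately have "x \<in> positions (top_sub (Suc a) (S m))" using D unfolding S_def by simp
    then have xm: "x \<in> positions (S m)" "take (Suc a) x = take (Suc a) (tp m)" using C1n[OF okm(1), of "Suc a"] an unfolding tp_def by auto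
    have e1: "take (Suc a) (H 0 m x) = take (Suc a) u"
      using P2[of 0 m "Suc a" x "tp m"] xm mR an tpin H0m by simp
    have e2: "take a (H 0 m x) = take (n-k) (toppos (S 0))"
      using tk[OF _ e1, of a] tuv tk[OF _ v0, of a] nk unfolding tp_def by simp
    have e3: "H 0 m x ! (n-k) = toppos (S 0) ! (n-k) - 1"
      using tn[OF _ e1, of a] t0a vsuc nk unfolding tp_def by simp
    have hp: "H 0 m x \<in> positions (S 0)" using P1[of 0 m x] xm mR by simp
    have "H 0 m x \<in> positions (top_sub (Suc (n-k)) s0')" using popctx.POP0[OF pc0 hp] e2 e3 nk by simp
    moreover have "hist n \<delta> R x = H 0 m x" unfolding H_def using Rsub by simp
    ultimately show "hist n \<delta> R x \<in> positions (top_sub (n - (k - 1)) s0')" using D nk by simp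
  qed
  have hdR: "snd (hd R) = S 0" unfolding S_def using R0 by (simp add: hd_conv_nth)
  have part2: "\<forall>i<length R - 1. \<not> upper n \<delta> (k - 1) (sub R i (length R - 1))"
  proof (intro allI impI notI)
    fix i assume i: "i < length R - 1" and upi: "upper n \<delta> (k - 1) (sub R i (length R - 1))"
    have im: "i < m" using i unfolding m_def .
    have ui: "take (Suc a) (H i m (tp m)) = take (Suc a) (tp i)" using upi UD[of i m] im mR unfolding m_def by simp
    show False
    proof (cases "i = m - 1")
      case True
      then have "take (Suc a) (tp m) = take (Suc a) (tp (m-1))" using ui Hm hsid by simp
      then have "tp m ! a = tp (m-1) ! a" using tn[of a "Suc a"] by blast
      then show False using PE by simp
    next
      case False
      then have im1: "i \<le> m - 1" "i < m - 1" using im by auto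
      define u' where "u' = H i (m-1) (tp m)"
      define v' where "v' = H i (m-1) (tp (m-1))"
      have Hi: "H i m (tp m) = u'" using Hm1[OF im1(1)] unfolding u'_def by simp
      have uv': "v' ! a = u' ! a \<or> v' ! a = Suc (u' ! a)"
        using P3[of i "m-1" a "tp m" "tp (m-1)"] mR an tpm1 tpm1' PC Sa im1 unfolding u'_def v'_def by simp
      have tuv': "take a u' = take a v'" using P2[of i "m-1" a "tp m" "tp (m-1)"] mR an tpm1 tpm1' PC im1 unfolding u'_def v'_def by simp
      have vp': "v' \<in> positions (S i)" using P1[of i "m-1" "tp (m-1)"] mR tpm1' im1 unfolding v'_def by simp
      have up': "u' \<in> positions (S i)" using P1[of i "m-1" "tp m"] mR tpm1 im1 unfolding u'_def by simp
      have iR: "i < length R" using im mR by simp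
      have lens': "length u' = n" "length v' = n" "length (tp i) = n" using lenS[OF iR up'] lenS[OF iR vp'] lenS[OF iR tpin[OF iR]] by auto
      have ui': "take (Suc a) u' = take (Suc a) (tp i)" using ui Hi by simp
      have tva: "take a v' = take a (tp i)" using tuv' tk[OF _ ui', of a] by simp
      have uia: "u' ! a = tp i ! a" using tn[OF _ ui', of a] by simp
      have "v' ! a \<le> tp i ! a" using C3[OF okR[OF iR] an vp'] tva unfolding tp_def by simp
      then have "v' ! a = u' ! a" using uv' uia by auto
      then have vt: "take (Suc a) v' = take (Suc a) (tp i)" using tS[of a v' "tp i"] lens' tva uia an by simp
      have "H 0 (m-1) (tp (m-1)) = H 0 i v'" using HC[of 0 i "m-1" "tp (m-1)"] im1 mR unfolding v'_def by simp
      moreover have "take (Suc a) (H 0 i v') = take (Suc a) (H 0 i (tp i))"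
        using P2[of 0 i "Suc a" v' "tp i"] iR an vp' tpin vt by simp
      ultimately have U0i: "take (Suc a) (H 0 i (tp i)) = take (Suc a) (tp 0)" using j0 jm1 by simp
      have "take (Suc a) (H 0 m (tp m)) = take (Suc a) (tp 0)"
        using compose[of 0 i m "Suc a"] U0i ui im mR an unfolding tp_def by simp
      then show False using notD by simp
    qed
  qed
  show ?thesis unfolding kreturn_def using part1 part2 p0 hdR by auto
qed

end


theorem mainTheorem7:
  fixes \<delta> :: "'q::finite \<Rightarrow> 'g::finite \<Rightarrow> ('q, 'a::finite, 'g) tr option"
    and n k :: nat and R :: "('q, 'g) config list"
  assumes "1 \<le> n" and "dpda n \<delta>"
    and "1 \<le> k" and "k \<le> n"
    and "run n \<delta> R" and "2 \<le> length R"
    and "\<not> upper n \<delta> (k - 1) R"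
    and "\<exists>j < length R - 1. upper n \<delta> k (sub R j (length R - 1))"
    and "upper n \<delta> (k - 1)
           (sub R 0 (GREATEST j. j < length R - 1 \<and> upper n \<delta> k (sub R j (length R - 1))))"
  shows "kreturn n \<delta> k R"
proof -
  interpret runctx n \<delta> R using assms(2) assms(5) by unfold_locales
  show ?thesis using main[OF assms(3) assms(4) assms(6) assms(7) assms(8) assms(9)] .
qed

end
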